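(* Assume the contextual smoothness condition with parameters $\delta>0$, $\mu\in(0,1)$, and let $\gamma=\delta(1-\mu)^{-1}$. For any strategies $w^j_t\in\Delta_K$ ($j\in[J]$, $t\in[T]$) played in the game protocol, with $\mathbf w_t=w^1_t\otimes\dots\otimes w^J_t$, $$\frac1T\sum_{t=1}^TC_t(\mathbf w_t)\le\gamma C^\star+\frac{1}{(1-\mu)T}\sum_{j=1}^J\mathrm{Reg}^j_T .$$
   Context: Setting. There are $J\ge1$ agents indexed by $j\in[J]$. Agent $j$ has a finite action set $\mathcal A^j=\{a^j_1,\dots,a^j_K\}$ with $K$ elements; $\mathcal A=\mathcal A^1\times\dots\times\mathcal A^J$, $\mathcal A^{-j}=\prod_{i\ne j}\mathcal A^i$, $\mathbf a=(a^j,\mathbf a^{-j})$. $\Delta_K$ is the probability simplex in $\mathbb R^K$, and $w\in\Delta_K$ is identified with the distribution on $\mathcal A^j$ putting mass $w[k]$ on $a^j_k$. The context set $\mathcal Z=\{z_1,\dots,z_m\}\subset\mathbb R^d$ is finite. Agent $j$ has $\phi^j:\mathcal A\to\mathbb R^d$ and cost $c^j(\mathbf w,Z)=\mathbb E_{\mathbf a\sim\mathbf w}[\langle\phi^j(\mathbf a),Z\rangle]$ (for a pure profile $\mathbf a$, $c^j(\mathbf a,Z)=\langle\phi^j(\mathbf a),Z\rangle$); for $w\in\Delta_K$ write $c^j(w,\mathbf w^{-j},Z)=c^j(w\otimes\mathbf w^{-j},Z)$. Standing assumption (bounded costs): $|\langle Z,\phi^j(\mathbf a)\rangle|\le1$.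 Game protocol: $T$ rounds, fixed sequence $Z_1,\dots,Z_T\in\mathcal Z$; at round $t$ each agent $j$ plays $w^j_t\in\Delta_K$ and incurs $c^j(w^j_t,\mathbf w^{-j}_t,Z_t)$ with $\mathbf w^{-j}_t=\bigotimes_{i\ne j}w^i_t$. Contextual external regret: $\mathrm{Reg}^j_T=\sum_{t=1}^Tc^j(w^j_t,\mathbf w^{-j}_t,Z_t)-\min_{\pi:\mathcal Z\to\Delta_K}\sum_{t=1}^Tc^j(\pi(Z_t),\mathbf w^{-j}_t,Z_t)$. Social cost: $C_t(\mathbf w)=\sum_{j=1}^Jc^j(\mathbf w,Z_t)$, and $C^\star=\min_{\boldsymbol\rho:\mathcal Z\to\mathcal A}T^{-1}\sum_{t=1}^T\sum_{j=1}^Jc^j(\boldsymbol\rho(Z_t),Z_t)$. Contextual smoothness condition with parameters $(\delta,\mu)$: for all $\mathbf a,\mathbf a_\star\in\mathcal A$ and $z\in\mathcal Z$, $\sum_{j}\langle z,\phi^j(a^j_\star,\mathbf a^{-j})\rangle\le\sum_j[\delta\langle z,\phi^j(\mathbf a_\star)\rangle+\mu\langle z,\phi^j(\mathbf a)\rangle]$. *)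

theory Defs
  imports "HOL-Analysis.Analysis"
begin

text \<open>Agents are indexed by j < J, actions of each agent by k < K (action a^j_k is k).
  A mixed strategy of one agent is a vector w :: nat => real in the prob_simplex Delta_K
  (only the entries k < K matter). A mixed profile W assigns to each agent j its strategy W j;
  the joint distribution is the product distribution.\<close>

definition prob_simplex :: "nat \<Rightarrow> (nat \<Rightarrow> real) set" where
  "prob_simplex K = {w. (\<forall>k<K. 0 \<le> w k) \<and> (\<Sum>k<K. w k) = 1}"

definition profiles :: "nat \<Rightarrow> nat \<Rightarrow> (nat \<Rightarrow> nat) set" where
  "profiles J K = PiE {..<J} (\<lambda>_. {..<K})"

definition prod_prob :: "nat \<Rightarrow> (nat \<Rightarrow> nat \<Rightarrow> real) \<Rightarrow> (nat \<Rightarrow> nat) \<Rightarrow> real" where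
  "prod_prob J W a = (\<Prod>i<J. W i (a i))"

definition cost :: "nat \<Rightarrow> nat \<Rightarrow> (nat \<Rightarrow> (nat \<Rightarrow> nat) \<Rightarrow> 'v::real_inner)
                   \<Rightarrow> nat \<Rightarrow> (nat \<Rightarrow> nat \<Rightarrow> real) \<Rightarrow> 'v \<Rightarrow> real" where
  "cost J K \<phi> j W z = (\<Sum>a\<in>profiles J K. prod_prob J W a * (\<phi> j a \<bullet> z))"

definition social_cost :: "nat \<Rightarrow> nat \<Rightarrow> (nat \<Rightarrow> (nat \<Rightarrow> nat) \<Rightarrow> 'v::real_inner)
                   \<Rightarrow> (nat \<Rightarrow> nat \<Rightarrow> real) \<Rightarrow> 'v \<Rightarrow> real" where
  "social_cost J K \<phi> W z = (\<Sum>j<J. cost J K \<phi> j W z)"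

text \<open>Contextual external regret of agent j; rounds are t < T, w t is the mixed profile
  at round t, Z t the context. The minimum over policies pi : Zset -> Delta_K is written as Inf.\<close>
definition regret :: "nat \<Rightarrow> nat \<Rightarrow> nat \<Rightarrow> (nat \<Rightarrow> (nat \<Rightarrow> nat) \<Rightarrow> 'v::real_inner)
                   \<Rightarrow> 'v set \<Rightarrow> (nat \<Rightarrow> 'v) \<Rightarrow> (nat \<Rightarrow> nat \<Rightarrow> nat \<Rightarrow> real) \<Rightarrow> nat \<Rightarrow> real" where
  "regret J K T \<phi> Zs Z w j =
     (\<Sum>t<T. cost J K \<phi> j (w t) (Z t))
     - Inf {\<Sum>t<T. cost J K \<phi> j ((w t)(j := \<pi> (Z t))) (Z t) | \<pi>. \<forall>z\<in>Zs. \<pi> z \<in> prob_simplex K}"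

definition opt_cost :: "nat \<Rightarrow> nat \<Rightarrow> nat \<Rightarrow> (nat \<Rightarrow> (nat \<Rightarrow> nat) \<Rightarrow> 'v::real_inner)
                   \<Rightarrow> 'v set \<Rightarrow> (nat \<Rightarrow> 'v) \<Rightarrow> real" where
  "opt_cost J K T \<phi> Zs Z =
     Inf {(1 / real T) * (\<Sum>t<T. \<Sum>j<J. \<phi> j (\<rho> (Z t)) \<bullet> Z t) | \<rho>. \<forall>z\<in>Zs. \<rho> z \<in> profiles J K}"

end

theory Submission imports Defs begin


lemma profiles_split:
  assumes "j < J"
  shows "(\<Sum>a\<in>profiles J K. h a) =
    (\<Sum>y<K. \<Sum>g\<in>PiE ({..<J}-{j}) (\<lambda>_. {..<K}). h (g(j:=y)))"
proof -
  let ?S = "{..<J}-{j}"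
  have e: "{..<J} = insert j ?S" using assms by auto
  have "profiles J K = (\<lambda>(y, g). g(j := y)) ` ({..<K} \<times> PiE ?S (\<lambda>_. {..<K}))"
    unfolding profiles_def by (subst e, rule PiE_insert_eq)
  moreover have "inj_on (\<lambda>(y, g). g(j := y)) ({..<K} \<times> PiE ?S (\<lambda>_. {..<K}))"
    using inj_combinator[of j ?S "\<lambda>_. {..<K}"] by simp
  ultimately have "(\<Sum>a\<in>profiles J K. h a) = (\<Sum>p\<in>{..<K} \<times> PiE ?S (\<lambda>_. {..<K}). h ((\<lambda>(y, g). g(j := y)) p))"
    by (simp add: sum.reindex)
  also have "\<dots> = (\<Sum>y<K. \<Sum>g\<in>PiE ?S (\<lambda>_. {..<K}). h (g(j:=y)))"
    by (simp add: sum.cartesian_product split_def)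
  finally show ?thesis .
qed

lemma prod_prob_split:
  assumes "j < J" "g \<in> PiE ({..<J}-{j}) (\<lambda>_. {..<K})"
  shows "prod_prob J V (g(j:=y)) = V j y * (\<Prod>i\<in>{..<J}-{j}. V i (g i))"
proof -
  have e: "{..<J} = insert j ({..<J}-{j})" using assms by auto
  show ?thesis unfolding prod_prob_def
    by (subst e, subst prod.insert) (auto intro!: prod.cong)
qed

lemma sum_prob:
  assumes "\<forall>i<J. W i \<in> prob_simplex K"
  shows "(\<Sum>a\<in>profiles J K. prod_prob J W a) = 1"
proof -
  have "(\<Sum>a\<in>profiles J K. prod_prob J W a) = (\<Prod>i<J. \<Sum>k<K. W i k)"
    unfolding profiles_def prod_prob_def by (subst prod_sum_PiE) auto
  also have "\<dots> = 1" using assms by (simp add: prob_simplex_def)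
  finally show ?thesis .
qed

lemma prob_nonneg:
  assumes "\<forall>i<J. W i \<in> prob_simplex K" "a \<in> profiles J K"
  shows "prod_prob J W a \<ge> 0"
  using assms unfolding prod_prob_def profiles_def prob_simplex_def
  by (intro prod_nonneg) (auto simp: PiE_iff)

definition ev :: "nat \<Rightarrow> nat \<Rightarrow> real" where "ev b = (\<lambda>k. if k = b then 1 else 0)"

lemma ev_simplex: "b < K \<Longrightarrow> ev b \<in> prob_simplex K"
  by (simp add: prob_simplex_def ev_def)

lemma dev:
  assumes "j < J" "b < K" "W j \<in> prob_simplex K"
  shows "(\<Sum>a\<in>profiles J K. prod_prob J (W(j := ev b)) a * f a)
       = (\<Sum>a\<in>profiles J K. prod_prob J W a * f (a(j:=b)))"
proof -
  let ?P = "PiE ({..<J}-{j}) (\<lambda>_. {..<K})"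
  let ?Q = "\<lambda>g. \<Prod>i\<in>{..<J}-{j}. W i (g i)"
  have q: "(\<Prod>i\<in>{..<J}-{j}. (W(j := ev b)) i (g i)) = ?Q g" for g
    by (rule prod.cong) auto
  have "(\<Sum>a\<in>profiles J K. prod_prob J (W(j := ev b)) a * f a)
     = (\<Sum>y<K. \<Sum>g\<in>?P. ev b y * (?Q g * f (g(j:=y))))"
    using assms(1) by (simp add: profiles_split prod_prob_split q mult.assoc cong: sum.cong)
  also have "\<dots> = (\<Sum>y<K. ev b y * (\<Sum>g\<in>?P. ?Q g * f (g(j:=y))))"
    by (simp add: sum_distrib_left)
  also have "\<dots> = (\<Sum>g\<in>?P. ?Q g * f (g(j:=b)))"
    using assms(2) by (simp add: ev_def if_distrib[of "\<lambda>c. c * _"] sum.delta cong: if_cong)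
  also have "\<dots> = (\<Sum>y<K. W j y) * (\<Sum>g\<in>?P. ?Q g * f (g(j:=b)))"
    using assms(3) by (simp add: prob_simplex_def)
  also have "\<dots> = (\<Sum>y<K. \<Sum>g\<in>?P. W j y * (?Q g * f ((g(j:=y))(j:=b))))"
    by (simp add: sum_distrib_left sum_distrib_right sum.swap[of _ "{..<K}"])
  also have "\<dots> = (\<Sum>a\<in>profiles J K. prod_prob J W a * f (a(j:=b)))"
    using assms(1) by (simp add: profiles_split prod_prob_split mult.assoc cong: sum.cong)
  finally show ?thesis .
qed


lemma cost_lower:
  assumes "\<forall>i<J. W i \<in> prob_simplex K" "\<forall>a\<in>profiles J K. \<bar>z \<bullet> \<phi> j a\<bar> \<le> 1"
  shows "cost J K \<phi> j W z \<ge> -1"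
proof -
  have "(\<Sum>a\<in>profiles J K. prod_prob J W a * (-1)) \<le> cost J K \<phi> j W z"
    unfolding cost_def
  proof (rule sum_mono)
    fix a assume a: "a \<in> profiles J K"
    have "-1 \<le> \<phi> j a \<bullet> z" using assms(2) a by (auto simp: inner_commute abs_le_iff)
    thus "prod_prob J W a * (-1) \<le> prod_prob J W a * (\<phi> j a \<bullet> z)"
      using prob_nonneg[OF assms(1) a] by (rule mult_left_mono)
  qed
  thus ?thesis using sum_prob[OF assms(1)] by (simp add: sum_negf)
qed

lemma stepA:
  assumes W: "\<forall>i<J. W i \<in> prob_simplex K" and r: "r \<in> profiles J K"
    and sm: "\<forall>a\<in>profiles J K. (\<Sum>j<J. z \<bullet> \<phi> j (a(j := r j)))
          \<le> (\<Sum>j<J. \<delta> * (z \<bullet> \<phi> j r) + \<mu> * (z \<bullet> \<phi> j a))"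
  shows "(\<Sum>j<J. cost J K \<phi> j (W(j := ev (r j))) z)
     \<le> \<delta> * (\<Sum>j<J. \<phi> j r \<bullet> z) + \<mu> * social_cost J K \<phi> W z"
proof -
  have rj: "j < J \<Longrightarrow> r j < K" for j using r by (auto simp: profiles_def PiE_iff)
  have "(\<Sum>j<J. cost J K \<phi> j (W(j := ev (r j))) z)
      = (\<Sum>j<J. \<Sum>a\<in>profiles J K. prod_prob J W a * (\<phi> j (a(j := r j)) \<bullet> z))"
    unfolding cost_def using W rj by (intro sum.cong refl dev) auto
  also have "\<dots> = (\<Sum>a\<in>profiles J K. prod_prob J W a * (\<Sum>j<J. z \<bullet> \<phi> j (a(j := r j))))"
    by (simp add: sum_distrib_left inner_commute sum.swap[of _ "{..<J}"])
  also have "\<dots> \<le> (\<Sum>a\<in>profiles J K. prod_prob J W a * (\<Sum>j<J. \<delta> * (z \<bullet> \<phi> j r) + \<mu> * (z \<bullet> \<phi> j a)))"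
    by (rule sum_mono, rule mult_left_mono) (use sm prob_nonneg[OF W] in auto)
  also have "\<dots> = (\<Sum>a\<in>profiles J K. prod_prob J W a) * (\<delta> * (\<Sum>j<J. \<phi> j r \<bullet> z))
       + \<mu> * (\<Sum>j<J. \<Sum>a\<in>profiles J K. prod_prob J W a * (\<phi> j a \<bullet> z))"
    by (simp add: sum.distrib sum_distrib_left sum_distrib_right distrib_left inner_commute
        sum.swap[of _ "{..<J}"] algebra_simps)
  also have "\<dots> = \<delta> * (\<Sum>j<J. \<phi> j r \<bullet> z) + \<mu> * social_cost J K \<phi> W z"
    by (simp add: sum_prob[OF W] social_cost_def cost_def)
  finally show ?thesis .
qed

theorem proposition4:
  fixes J K T :: nat
    and \<phi> :: "nat \<Rightarrow> (nat \<Rightarrow> nat) \<Rightarrow> 'v::euclidean_space"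
    and Zs :: "'v set"
    and Z :: "nat \<Rightarrow> 'v"
    and w :: "nat \<Rightarrow> nat \<Rightarrow> nat \<Rightarrow> real"
    and \<delta> \<mu> :: real
  assumes "J \<ge> 1" and "K \<ge> 1" and "T \<ge> 1"
    and "finite Zs"
    and "\<forall>t<T. Z t \<in> Zs"
    and bounded: "\<forall>j<J. \<forall>a\<in>profiles J K. \<forall>z\<in>Zs. \<bar>z \<bullet> \<phi> j a\<bar> \<le> 1"
    and smooth: "\<forall>a\<in>profiles J K. \<forall>a'\<in>profiles J K. \<forall>z\<in>Zs.
        (\<Sum>j<J. z \<bullet> \<phi> j (a(j := a' j)))
          \<le> (\<Sum>j<J. \<delta> * (z \<bullet> \<phi> j a') + \<mu> * (z \<bullet> \<phi> j a))"
    and "\<delta> > 0" and "0 < \<mu>" and "\<mu> < 1"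
    and "\<forall>t<T. \<forall>j<J. w t j \<in> prob_simplex K"
  shows "(1 / real T) * (\<Sum>t<T. social_cost J K \<phi> (w t) (Z t))
           \<le> (\<delta> / (1 - \<mu>)) * opt_cost J K T \<phi> Zs Z
             + (1 / ((1 - \<mu>) * real T)) * (\<Sum>j<J. regret J K T \<phi> Zs Z w j)"
  proof -
  note wS = assms(11)
  have ZS: "\<And>t. t < T \<Longrightarrow> Z t \<in> Zs" using assms(5) by auto
  define S where "S = (\<Sum>t<T. social_cost J K \<phi> (w t) (Z t))"
  define R where "R = (\<Sum>j<J. regret J K T \<phi> Zs Z w j)"
  define val where "val \<rho> = (1 / real T) * (\<Sum>t<T. \<Sum>j<J. \<phi> j (\<rho> (Z t)) \<bullet> Z t)" for \<rho> :: "'v \<Rightarrow> nat \<Rightarrow> nat"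
  have key: "(1 - \<mu>) * S - R \<le> \<delta> * real T * val \<rho>" if \<rho>: "\<forall>z\<in>Zs. \<rho> z \<in> profiles J K" for \<rho>
  proof -
    define dv where "dv j t = cost J K \<phi> j ((w t)(j := ev (\<rho> (Z t) j))) (Z t)" for j t
    have reg: "(\<Sum>t<T. cost J K \<phi> j (w t) (Z t)) - (\<Sum>t<T. dv j t) \<le> regret J K T \<phi> Zs Z w j"
      if j: "j < J" for j
    proof -
      let ?A = "{\<Sum>t<T. cost J K \<phi> j ((w t)(j := \<pi> (Z t))) (Z t) | \<pi>. \<forall>z\<in>Zs. \<pi> z \<in> prob_simplex K}"
      have mem: "(\<Sum>t<T. dv j t) \<in> ?A"
        unfolding dv_def using \<rho> j
        by (intro CollectI exI[of _ "\<lambda>z. ev (\<rho> z j)"]) (auto intro!: ev_simplex simp: profiles_def PiE_iff)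
      have bdd: "bdd_below ?A"
      proof (rule bdd_belowI[of _ "- real T"])
        fix x assume "x \<in> ?A"
        then obtain \<pi> where pi: "\<forall>z\<in>Zs. \<pi> z \<in> prob_simplex K"
          and x: "x = (\<Sum>t<T. cost J K \<phi> j ((w t)(j := \<pi> (Z t))) (Z t))" by auto
        have "(\<Sum>t<T. (-1::real)) \<le> x" unfolding x
          using pi ZS wS bounded j
          by (intro sum_mono cost_lower) auto
        thus "- real T \<le> x" by simp
      qed
      have "Inf ?A \<le> (\<Sum>t<T. dv j t)" by (rule cInf_lower[OF mem bdd])
      thus ?thesis unfolding regret_def by simp
    qed
    have A: "(\<Sum>j<J. dv j t) \<le> \<delta> * (\<Sum>j<J. \<phi> j (\<rho> (Z t)) \<bullet> Z t) + \<mu> * social_cost J K \<phi> (w t) (Z t)"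
      if t: "t < T" for t
      unfolding dv_def
      using stepA[of J "w t" K "\<rho> (Z t)" "Z t" \<phi> \<delta> \<mu>] wS t \<rho> ZS smooth by auto
    have "S = (\<Sum>j<J. \<Sum>t<T. cost J K \<phi> j (w t) (Z t))"
      unfolding S_def social_cost_def by (rule sum.swap)
    also have "\<dots> \<le> (\<Sum>j<J. regret J K T \<phi> Zs Z w j + (\<Sum>t<T. dv j t))"
      proof (rule sum_mono)
      fix j assume "j \<in> {..<J}"
      thus "(\<Sum>t<T. cost J K \<phi> j (w t) (Z t)) \<le> regret J K T \<phi> Zs Z w j + (\<Sum>t<T. dv j t)"
        using reg[of j] by simp
    qed
    also have "\<dots> = R + (\<Sum>t<T. \<Sum>j<J. dv j t)"
      unfolding R_def sum.distrib using sum.swap[of "\<lambda>j t. dv j t" "{..<T}" "{..<J}"] by simp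
    also have "\<dots> \<le> R + (\<Sum>t<T. \<delta> * (\<Sum>j<J. \<phi> j (\<rho> (Z t)) \<bullet> Z t) + \<mu> * social_cost J K \<phi> (w t) (Z t))"
      using A by (intro add_left_mono sum_mono) auto
    also have "\<dots> = R + \<delta> * real T * val \<rho> + \<mu> * S"
      using assms(3) unfolding val_def S_def by (simp add: sum.distrib sum_distrib_left)
    finally show ?thesis by (simp add: algebra_simps)
  qed
  define Opt where "Opt = opt_cost J K T \<phi> Zs Z"
  have Oge: "((1 - \<mu>) * S - R) / (\<delta> * real T) \<le> Opt"
  proof -
    let ?B = "{(1 / real T) * (\<Sum>t<T. \<Sum>j<J. \<phi> j (\<rho> (Z t)) \<bullet> Z t) | \<rho>. \<forall>z\<in>Zs. \<rho> z \<in> profiles J K}"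
    have ne: "?B \<noteq> {}"
    proof -
      define r0 :: "nat \<Rightarrow> nat" where "r0 = restrict (\<lambda>_. 0) {..<J}"
      have r0: "r0 \<in> profiles J K" using assms(2) unfolding r0_def by (auto simp: profiles_def)
      have "(1 / real T) * (\<Sum>t<T. \<Sum>j<J. \<phi> j ((\<lambda>_. r0) (Z t)) \<bullet> Z t) \<in> ?B"
        by (intro CollectI exI[of _ "\<lambda>_. r0"] conjI refl) (use r0 in simp)
      thus ?thesis by (metis empty_iff)
    qed
    have "((1 - \<mu>) * S - R) / (\<delta> * real T) \<le> Inf ?B"
    proof (rule cInf_greatest[OF ne])
      fix x assume "x \<in> ?B"
      then obtain \<rho> where \<rho>: "\<forall>z\<in>Zs. \<rho> z \<in> profiles J K" and x: "x = val \<rho>"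
        unfolding val_def by blast
      have pos: "\<delta> * real T > 0" using assms(3,8) by simp
      show "((1 - \<mu>) * S - R) / (\<delta> * real T) \<le> x"
        unfolding pos_divide_le_eq[OF pos] using key[OF \<rho>] x by (simp add: mult.commute)
    qed
    thus ?thesis unfolding Opt_def opt_cost_def .
  qed
  have d: "\<delta> / (1 - \<mu>) \<ge> 0" using assms(8,10) by simp
  have "(\<delta> / (1 - \<mu>)) * (((1 - \<mu>) * S - R) / (\<delta> * real T)) \<le> (\<delta> / (1 - \<mu>)) * Opt"
    using Oge d by (rule mult_left_mono)
  moreover have "(\<delta> / (1 - \<mu>)) * (((1 - \<mu>) * S - R) / (\<delta> * real T)) + (1 / ((1 - \<mu>) * real T)) * R
      = (1 / real T) * S"
  proof -
    have "\<delta> \<noteq> 0" "1 - \<mu> \<noteq> 0" "real T \<noteq> 0" using assms(3,8,10) by auto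
    hence "(\<delta> / (1 - \<mu>)) * (((1 - \<mu>) * S - R) / (\<delta> * real T)) = ((1 - \<mu>) * S - R) / ((1 - \<mu>) * real T)"
      by simp
    also have "\<dots> = S / real T - R / ((1 - \<mu>) * real T)"
      using \<open>1 - \<mu> \<noteq> 0\<close> \<open>real T \<noteq> 0\<close> by (simp add: diff_divide_distrib)
    finally show ?thesis by simp
  qed
  ultimately show ?thesis unfolding S_def[symmetric] R_def[symmetric] Opt_def[symmetric] by linarith
qed

end
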